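(* Let $X$ be a Banach space with a Schauder basis, $k\in\mathbb{N}$, $(x_s)_{s\in[\mathbb{N}]^k}$ a $k$-sequence in $X$ and $(\varepsilon_n)_n$ a null sequence of positive reals. Assume that for some infinite $M\subseteq\mathbb{N}$, $(x_s)_{s\in[M]^k}$ is subordinated with respect to the weak topology of $X$, and let $x_0$ be its weak limit (i.e. $x_0=\widehat\varphi(\emptyset)$ for the witnessing map $\widehat\varphi$). Then there exist an infinite $L\subseteq M$ and a family $(\widetilde x_s)_{s\in[L]^k}$ in $X$ such that: (i) $(\widetilde x_s)_{s\in[L]^k}$ admits a canonical tree decomposition $(y_t)_{t\in[L]^{\le k}}$ with $y_\emptyset=x_0$; (ii) for every $s\in[L]^k$, $\|x_s-\widetilde x_s\|<\varepsilon_n$, where $n$ is such that $\min s=L(n)$; (iii) $(\widetilde x_s)_{s\in[L]^k}$ is subordinated with respect to the weak topology of $X$, with weak limit $x_0$.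
   Context: $[M]^k$ (resp. $[M]^{\le k}$) is the set of subsets of $M$ of size $k$ (resp. at most $k$), each identified with its increasing enumeration; $L(n)$ is the $n$-th element of $L$; for $s\in[\mathbb{N}]^k$ and $j\le k$, $s|j=\{s(1),\dots,s(j)\}$ ($s|0=\emptyset$). $[M]^{\le k}$ carries the topology induced by identifying subsets of $\mathbb{N}$ with points of $\{0,1\}^{\mathbb{N}}$ (a compact metric space). A $k$-sequence $(x_s)_{s\in[M]^k}$ is subordinated (w.r.t. the weak topology) if there is a continuous $\widehat\varphi:[M]^{\le k}\to(X,w)$ with $\widehat\varphi(s)=x_s$ for all $s\in[M]^k$; then $(x_s)_{s\in[M]^k}$ converges weakly to $\widehat\varphi(\emptyset)$, meaning that for every weak neighbourhood $U$ of $\widehat\varphi(\emptyset)$ there is $m$ with $x_s\in U$ whenever $s\in[M]^k$, $s(1)\ge M(m)$. A pair $(s_1,s_2)$ in $[L]^k$ is a plegma pair if $s_1(i)<s_2(i)$ for all $i\le k$ and $s_2(i)<s_1(i+1)$ for all $i<k$. Supports are with respect to the Schauder basis; for sets $A<B$ means $\max A<\min B$. A family $(y_t)_{t\in[L]^{\le k}}$ is a canonical tree decomposition of $(x_s)_{s\in[L]^k}$ if: (i) $x_s=\sum_{j=0}^k y_{s|j}$ for every $s\in[L]^k$; (ii) $\mathrm{supp}(y_t)$ is finite for $t\ne\emptyset$; (iii) $\mathrm{supp}(y_{s|j_1})<\mathrm{supp}(y_{s|j_2})$ for all $s\in[L]^k$ and $1\le j_1<j_2\le k$; (iv) $\mathrm{supp}(y_{s_1|j_1})<\mathrm{supp}(y_{s_2|j_2})$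 for every plegma pair $(s_1,s_2)$ in $[L]^k$ and $1\le j_1\le j_2\le k$; (v) $\mathrm{supp}(y_{s_2|j_1})<\mathrm{supp}(y_{s_1|j_2})$ for every plegma pair $(s_1,s_2)$ in $[L]^k$ and $1\le j_1<j_2\le k$. *)

theory Defs
  imports "HOL-Analysis.Analysis" "HOL-Library.Ramsey" "HOL-Library.Infinite_Set"
begin

definition schauder_basis :: "(nat \<Rightarrow> 'a::banach) \<Rightarrow> bool" where
  "schauder_basis e \<longleftrightarrow> (\<forall>x. \<exists>!c. (\<lambda>n. c n *\<^sub>R e n) sums x)"

definition basis_coeffs :: "(nat \<Rightarrow> 'a::banach) \<Rightarrow> 'a \<Rightarrow> nat \<Rightarrow> real" where
  "basis_coeffs e x = (THE c. (\<lambda>n. c n *\<^sub>R e n) sums x)"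

definition supp :: "(nat \<Rightarrow> 'a::banach) \<Rightarrow> 'a \<Rightarrow> nat set" where
  "supp e x = {n. basis_coeffs e x n \<noteq> 0}"

text \<open>A < B means max A < min B (vacuous if one of them is empty).\<close>
definition set_less :: "nat set \<Rightarrow> nat set \<Rightarrow> bool" where
  "set_less A B \<longleftrightarrow> (\<forall>a\<in>A. \<forall>b\<in>B. a < b)"

definition weak_topology :: "'a::real_normed_vector topology" where
  "weak_topology = topology_generated_by
     {f -` U | f U. bounded_linear (f :: 'a \<Rightarrow> real) \<and> open U}"

text \<open>Subsets of nat identified with points of the Cantor space {0,1}^N (product topology).\<close>
definition cantor_topology :: "nat set topology" where
  "cantor_topology = topology_generated_by
     ({{A. n \<in> A} | n. True} \<union> {{A. n \<notin> A} | n. True})"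

definition nsets_le :: "nat set \<Rightarrow> nat \<Rightarrow> nat set set" where
  "nsets_le M k = {N. N \<subseteq> M \<and> finite N \<and> card N \<le> k}"

definition restr :: "nat set \<Rightarrow> nat \<Rightarrow> nat set" where
  "restr s j = set (take j (sorted_list_of_set s))"

text \<open>plegma pair of k-element sets (elements indexed from 0 here)\<close>
definition plegma :: "nat \<Rightarrow> nat set \<Rightarrow> nat set \<Rightarrow> bool" where
  "plegma k s1 s2 \<longleftrightarrow>
     (let l1 = sorted_list_of_set s1; l2 = sorted_list_of_set s2 in
       (\<forall>i<k. l1 ! i < l2 ! i) \<and> (\<forall>i. Suc i < k \<longrightarrow> l2 ! i < l1 ! Suc i))"

definition subordinated :: "nat set \<Rightarrow> nat \<Rightarrow> (nat set \<Rightarrow> 'a::real_normed_vector)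
    \<Rightarrow> (nat set \<Rightarrow> 'a) \<Rightarrow> bool" where
  "subordinated M k x \<phi> \<longleftrightarrow>
     continuous_map (subtopology cantor_topology (nsets_le M k)) weak_topology \<phi> \<and>
     (\<forall>s\<in>[M]\<^bsup>k\<^esup>. \<phi> s = x s)"

definition canonical_tree_decomposition ::
  "(nat \<Rightarrow> 'a::banach) \<Rightarrow> nat set \<Rightarrow> nat \<Rightarrow> (nat set \<Rightarrow> 'a) \<Rightarrow> (nat set \<Rightarrow> 'a) \<Rightarrow> bool" where
  "canonical_tree_decomposition e L k x y \<longleftrightarrow>
     (\<forall>s\<in>[L]\<^bsup>k\<^esup>. x s = (\<Sum>j\<le>k. y (restr s j))) \<and>
     (\<forall>t\<in>nsets_le L k. t \<noteq> {} \<longrightarrow> finite (supp e (y t))) \<and>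
     (\<forall>s\<in>[L]\<^bsup>k\<^esup>. \<forall>j1 j2. 1 \<le> j1 \<and> j1 < j2 \<and> j2 \<le> k \<longrightarrow>
        set_less (supp e (y (restr s j1))) (supp e (y (restr s j2)))) \<and>
     (\<forall>s1\<in>[L]\<^bsup>k\<^esup>. \<forall>s2\<in>[L]\<^bsup>k\<^esup>. plegma k s1 s2 \<longrightarrow>
        (\<forall>j1 j2. 1 \<le> j1 \<and> j1 \<le> j2 \<and> j2 \<le> k \<longrightarrow>
           set_less (supp e (y (restr s1 j1))) (supp e (y (restr s2 j2))))) \<and>
     (\<forall>s1\<in>[L]\<^bsup>k\<^esup>. \<forall>s2\<in>[L]\<^bsup>k\<^esup>. plegma k s1 s2 \<longrightarrow>
        (\<forall>j1 j2. 1 \<le> j1 \<and> j1 < j2 \<and> j2 \<le> k \<longrightarrow>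
           set_less (supp e (y (restr s2 j1))) (supp e (y (restr s1 j2)))))"

end

theory Submission
  imports Defs
begin
locale sbasis =
  fixes e :: "nat \<Rightarrow> 'a::banach"
  assumes sb: "schauder_basis e"
begin

definition coef :: "'a \<Rightarrow> nat \<Rightarrow> real" where "coef = basis_coeffs e"

lemma coef_sums: "(\<lambda>n. coef x n *\<^sub>R e n) sums x"
proof -
  have "\<exists>!c. (\<lambda>n. c n *\<^sub>R e n) sums x" using sb unfolding schauder_basis_def by blast
  then show ?thesis unfolding coef_def basis_coeffs_def by (rule theI')
qed

lemma coef_unique: "(\<lambda>n. c n *\<^sub>R e n) sums x \<Longrightarrow> coef x = c"
proof -
  assume a: "(\<lambda>n. c n *\<^sub>R e n) sums x"
  have "\<exists>!c. (\<lambda>n. c n *\<^sub>R e n) sums x" using sb unfolding schauder_basis_def by blast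
  then show ?thesis using a coef_sums by blast
qed

lemma e_nonzero: "e n \<noteq> 0"
proof
  assume z: "e n = 0"
  have "(\<lambda>i. (0::real) *\<^sub>R e i) sums 0" by simp
  then have 1: "coef 0 = (\<lambda>i. 0)" by (rule coef_unique)
  have "(\<lambda>i. (if i = n then 1 else 0::real) *\<^sub>R e i) = (\<lambda>i. 0)" using z by (auto simp: fun_eq_iff)
  then have "(\<lambda>i. (if i = n then 1 else 0::real) *\<^sub>R e i) sums 0" by simp
  then have "coef 0 = (\<lambda>i. if i = n then 1 else 0)" by (rule coef_unique)
  with 1 show False by (metis zero_neq_one)
qed

lemma coef_add: "coef (x + y) n = coef x n + coef y n"
proof -
  have "(\<lambda>n. (coef x n + coef y n) *\<^sub>R e n) sums (x + y)"
    using sums_add[OF coef_sums[of x] coef_sums[of y]] by (simp add: scaleR_add_left)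
  then show ?thesis using coef_unique by metis
qed

lemma coef_scale: "coef (a *\<^sub>R x) n = a * coef x n"
proof -
  have "(\<lambda>n. (a * coef x n) *\<^sub>R e n) sums (a *\<^sub>R x)"
    using sums_scaleR_right[OF coef_sums[of x], of a] by simp
  then show ?thesis using coef_unique by metis
qed

lemma coef_minus: "coef (- x) n = - coef x n"
  using coef_scale[of "-1" x n] by simp

lemma coef_diff: "coef (x - y) n = coef x n - coef y n"
  using coef_add[of x "-y" n] coef_minus[of y n] by simp

lemma coef_finite:
  assumes "finite F"
  shows "coef (\<Sum>i\<in>F. a i *\<^sub>R e i) = (\<lambda>n. if n \<in> F then a n else 0)"
proof (rule coef_unique)
  have "(\<lambda>n. (if n \<in> F then a n else 0) *\<^sub>R e n) sums (\<Sum>n\<in>F. (if n \<in> F then a n else 0) *\<^sub>R e n)"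
    by (rule sums_finite[OF assms]) auto
  then show "(\<lambda>n. (if n \<in> F then a n else 0) *\<^sub>R e n) sums (\<Sum>i\<in>F. a i *\<^sub>R e i)"
    by simp
qed

definition P :: "nat \<Rightarrow> 'a \<Rightarrow> 'a" where "P n x = (\<Sum>i<n. coef x i *\<^sub>R e i)"

lemma P_lim: "(\<lambda>n. P n x) \<longlonglongrightarrow> x"
  using coef_sums[of x] unfolding sums_def P_def by simp

lemma P_add: "P n (x + y) = P n x + P n y"
  by (simp add: P_def coef_add scaleR_add_left sum.distrib)

lemma P_diff: "P n (x - y) = P n x - P n y"
  by (simp add: P_def coef_diff scaleR_diff_left sum_subtractf)

lemma P_scale: "P n (a *\<^sub>R x) = a *\<^sub>R P n x"
  by (simp add: P_def coef_scale scaleR_sum_right)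

lemma P_bdd: "bdd_above (range (\<lambda>n. norm (P n x)))"
proof -
  have "Bseq (\<lambda>n. P n x)" using P_lim convergent_imp_Bseq convergentI by blast
  then obtain K where "\<And>n. norm (P n x) \<le> K" unfolding Bseq_def by blast
  then show ?thesis by (intro bdd_aboveI[where M=K]) auto
qed

definition tn :: "'a \<Rightarrow> real" where "tn x = (SUP n. norm (P n x))"

lemma tn_ge: "norm (P n x) \<le> tn x"
  unfolding tn_def by (rule cSUP_upper[OF _ P_bdd]) auto

lemma tn_le: "(\<And>n. norm (P n x) \<le> B) \<Longrightarrow> tn x \<le> B"
  unfolding tn_def by (rule cSUP_least) auto

lemma tn_nonneg: "0 \<le> tn x"
  using tn_ge[of 0 x] norm_ge_zero order_trans by blast

lemma norm_le_tn: "norm x \<le> tn x"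
proof -
  have "(\<lambda>n. norm (P n x)) \<longlonglongrightarrow> norm x" using P_lim tendsto_norm by blast
  then show ?thesis by (rule LIMSEQ_le_const2) (auto intro: tn_ge)
qed

lemma tn_add: "tn (x + y) \<le> tn x + tn y"
proof (rule tn_le)
  fix n
  have "norm (P n (x + y)) \<le> norm (P n x) + norm (P n y)" by (simp add: P_add norm_triangle_ineq)
  then show "norm (P n (x + y)) \<le> tn x + tn y" using tn_ge[of n x] tn_ge[of n y] by linarith
qed

lemma tn_scale: "tn (a *\<^sub>R x) \<le> \<bar>a\<bar> * tn x"
proof (rule tn_le)
  fix n
  show "norm (P n (a *\<^sub>R x)) \<le> \<bar>a\<bar> * tn x"
    by (simp add: P_scale mult_left_mono tn_ge)
qed

lemma tn_minus: "tn (- x) = tn x"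
proof -
  have "tn (-x) \<le> tn x" using tn_scale[of "-1" x] by simp
  moreover have "tn x \<le> tn (-x)" using tn_scale[of "-1" "-x"] by simp
  ultimately show ?thesis by simp
qed

lemma tn_diff: "tn (x - y) \<le> tn x + tn y"
  using tn_add[of x "-y"] tn_minus[of y] by simp

lemma tn_zero: "tn 0 = 0"
  using tn_scale[of 0 0] tn_nonneg[of 0] by simp

lemma tn_sum: "tn (\<Sum>i\<in>F. g i) \<le> (\<Sum>i\<in>F. tn (g i))"
proof (induction F rule: infinite_finite_induct)
  case (infinite A) then show ?case by (simp add: tn_zero)
next
  case empty then show ?case by (simp add: tn_zero)
next
  case (insert x F)
  then show ?case using tn_add[of "g x" "sum g F"] by simp
qed

lemma P_Suc: "P (Suc i) x - P i x = coef x i *\<^sub>R e i"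
  by (simp add: P_def)

lemma coef_bound: "\<bar>coef x i\<bar> * norm (e i) \<le> 2 * tn x"
proof -
  have "\<bar>coef x i\<bar> * norm (e i) = norm (P (Suc i) x - P i x)" by (simp add: P_Suc)
  also have "\<dots> \<le> norm (P (Suc i) x) + norm (P i x)" by (rule norm_triangle_ineq4)
  also have "\<dots> \<le> 2 * tn x" using tn_ge[of "Suc i" x] tn_ge[of i x] by simp
  finally show ?thesis .
qed

end

context sbasis begin

lemma tn_complete:
  fixes X :: "nat \<Rightarrow> 'a"
  assumes C: "\<And>\<epsilon>. \<epsilon> > 0 \<Longrightarrow> \<exists>J. \<forall>j\<ge>J. \<forall>l\<ge>J. tn (X j - X l) < \<epsilon>"
  shows "\<exists>x. \<forall>\<epsilon>>0. \<exists>J. \<forall>j\<ge>J. tn (X j - x) \<le> \<epsilon>"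
proof -
  have "\<exists>a. (\<lambda>j. coef (X j) i) \<longlonglongrightarrow> a" for i
  proof -
    have "Cauchy (\<lambda>j. coef (X j) i)"
    proof (rule metric_CauchyI)
      fix \<epsilon> :: real assume "\<epsilon> > 0"
      have ne: "norm (e i) > 0" using e_nonzero by simp
      obtain J where J: "\<forall>j\<ge>J. \<forall>l\<ge>J. tn (X j - X l) < \<epsilon> * norm (e i) / 2"
        using C[of "\<epsilon> * norm (e i) / 2"] \<open>\<epsilon> > 0\<close> ne by auto
      show "\<exists>M. \<forall>m\<ge>M. \<forall>n\<ge>M. dist (coef (X m) i) (coef (X n) i) < \<epsilon>"
      proof (intro exI allI impI)
        fix m n assume "J \<le> m" "J \<le> n"
        have "\<bar>coef (X m - X n) i\<bar> * norm (e i) \<le> 2 * tn (X m - X n)" by (rule coef_bound)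
        also have "\<dots> < \<epsilon> * norm (e i)" using J \<open>J \<le> m\<close> \<open>J \<le> n\<close> by force
        finally have "\<bar>coef (X m - X n) i\<bar> < \<epsilon>" using ne by simp
        then show "dist (coef (X m) i) (coef (X n) i) < \<epsilon>" by (simp add: dist_real_def coef_diff)
      qed
    qed
    then show ?thesis using Cauchy_convergent_iff convergent_def by blast
  qed
  then obtain a where a: "\<And>i. (\<lambda>j. coef (X j) i) \<longlonglongrightarrow> a i" by metis
  define S where "S n = (\<Sum>i<n. a i *\<^sub>R e i)" for n
  have PS: "(\<lambda>j. P n (X j)) \<longlonglongrightarrow> S n" for n
    unfolding P_def S_def by (intro tendsto_intros a)
  have unif: "\<exists>J. \<forall>j\<ge>J. \<forall>n. norm (P n (X j) - S n) \<le> \<epsilon>" if eps: "\<epsilon> > 0" for \<epsilon>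
  proof -
    obtain J where J: "\<forall>j\<ge>J. \<forall>l\<ge>J. tn (X j - X l) < \<epsilon>" using C eps by blast
    show ?thesis
    proof (intro exI allI impI)
      fix j n assume "J \<le> j"
      have "(\<lambda>l. norm (P n (X j) - P n (X l))) \<longlonglongrightarrow> norm (P n (X j) - S n)"
        by (intro tendsto_intros PS)
      moreover have "\<forall>l\<ge>J. norm (P n (X j) - P n (X l)) \<le> \<epsilon>"
      proof (intro allI impI)
        fix l assume "J \<le> l"
        have "norm (P n (X j) - P n (X l)) = norm (P n (X j - X l))" by (simp add: P_diff)
        also have "\<dots> \<le> tn (X j - X l)" by (rule tn_ge)
        also have "\<dots> < \<epsilon>" using J \<open>J \<le> j\<close> \<open>J \<le> l\<close> by blast
        finally show "norm (P n (X j) - P n (X l)) \<le> \<epsilon>" by simp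
      qed
      ultimately show "norm (P n (X j) - S n) \<le> \<epsilon>"
        by (intro LIMSEQ_le_const2) auto
    qed
  qed
  have "Cauchy S"
  proof (rule metric_CauchyI)
    fix \<epsilon> :: real assume "\<epsilon> > 0"
    obtain J where J: "\<forall>j\<ge>J. \<forall>n. norm (P n (X j) - S n) \<le> \<epsilon>/4" using unif[of "\<epsilon>/4"] \<open>\<epsilon>>0\<close> by auto
    have "Cauchy (\<lambda>n. P n (X J))" using P_lim convergent_Cauchy convergentI by blast
    then obtain N where N: "\<forall>m\<ge>N. \<forall>n\<ge>N. dist (P m (X J)) (P n (X J)) < \<epsilon>/4"
      using metric_CauchyD[of "\<lambda>n. P n (X J)" "\<epsilon>/4"] \<open>\<epsilon>>0\<close> by auto
    show "\<exists>M. \<forall>m\<ge>M. \<forall>n\<ge>M. dist (S m) (S n) < \<epsilon>"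
    proof (intro exI allI impI)
      fix m n assume "N \<le> m" "N \<le> n"
      have eq: "S m - S n = - (P m (X J) - S m) + (P m (X J) - P n (X J)) + (P n (X J) - S n)" by simp
      have "dist (S m) (S n) \<le> norm (- (P m (X J) - S m)) + norm (P m (X J) - P n (X J)) + norm (P n (X J) - S n)"
        unfolding dist_norm eq by (meson norm_triangle_le order_refl add_mono norm_triangle_ineq)
      also have "\<dots> < \<epsilon>"
      proof -
        have "norm (- (P m (X J) - S m)) \<le> \<epsilon>/4" using J by (simp only: norm_minus_cancel)
        moreover have "norm (P n (X J) - S n) \<le> \<epsilon>/4" using J by simp
        moreover have "norm (P m (X J) - P n (X J)) < \<epsilon>/4" using N \<open>N \<le> m\<close> \<open>N \<le> n\<close> by (simp add: dist_norm)
        ultimately show ?thesis using \<open>\<epsilon>>0\<close> by linarith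
      qed
      finally show "dist (S m) (S n) < \<epsilon>" .
    qed
  qed
  then obtain x where x: "S \<longlonglongrightarrow> x" using Cauchy_convergent_iff convergent_def by blast
  have "(\<lambda>n. a n *\<^sub>R e n) sums x" unfolding sums_def using x unfolding S_def by simp
  then have cx: "coef x = a" by (rule coef_unique)
  have Px: "P n x = S n" for n by (simp add: P_def S_def cx)
  show ?thesis
  proof (rule exI[of _ x], intro allI impI)
    fix \<epsilon> :: real assume "\<epsilon> > 0"
    obtain J where J: "\<forall>j\<ge>J. \<forall>n. norm (P n (X j) - S n) \<le> \<epsilon>" using unif \<open>\<epsilon>>0\<close> by blast
    show "\<exists>J. \<forall>j\<ge>J. tn (X j - x) \<le> \<epsilon>"
    proof (rule exI[of _ J], intro allI impI)
      fix j assume "J \<le> j"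
      show "tn (X j - x) \<le> \<epsilon>"
        by (rule tn_le) (use J \<open>J \<le> j\<close> in \<open>simp add: P_diff Px\<close>)
    qed
  qed
qed

lemma tn_baire: "\<exists>N::nat. \<exists>x0 r. r > 0 \<and> ball x0 r \<subseteq> closure {x. tn x \<le> real N}"
proof (rule ccontr)
  assume H: "\<not> ?thesis"
  have "euclidean interior_of \<Union>(range (\<lambda>N::nat. closure {x. tn x \<le> real N})) = {}"
  proof (rule Baire_category_alt)
    show "completely_metrizable_space (euclidean :: 'a topology) \<or>
      locally_compact_space (euclidean :: 'a topology) \<and> regular_space (euclidean :: 'a topology)"
      using completely_metrizable_space_euclidean by blast
    show "countable (range (\<lambda>N::nat. closure {x. tn x \<le> real N}))" by simp
    fix T assume "T \<in> range (\<lambda>N::nat. closure {x. tn x \<le> real N})"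
    then obtain N where T: "T = closure {x. tn x \<le> real N}" by blast
    show "closedin euclidean T \<and> euclidean interior_of T = {}"
    proof
      show "closedin euclidean T" using T closed_closedin by blast
      show "euclidean interior_of T = {}"
      proof (rule ccontr)
        assume "euclidean interior_of T \<noteq> {}"
        then obtain y where "y \<in> interior T" by auto
        moreover have "open (interior T)" by simp
        ultimately obtain r where r: "r > 0" "ball y r \<subseteq> interior T" by (meson open_contains_ball)
        have "ball y r \<subseteq> T" by (rule order_trans[OF r(2) interior_subset])
        then have "\<exists>N::nat. \<exists>x0 r. r > 0 \<and> ball x0 r \<subseteq> closure {x. tn x \<le> real N}"
          using r(1) T \<open>ball y r \<subseteq> T\<close> by (intro exI[of _ N] exI[of _ y] exI[of _ r]) simp
        then show False using H by blast
      qed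
    qed
  qed
  moreover have "\<Union>(range (\<lambda>N::nat. closure {x. tn x \<le> real N})) = UNIV"
  proof -
    show ?thesis
    proof (rule sym, rule UNIV_eq_I)
      fix x :: 'a
      have 1: "x \<in> closure {y. tn y \<le> real (nat \<lceil>tn x\<rceil>)}"
        by (rule closure_subset[THEN subsetD]) (simp add: real_nat_ceiling_ge)
      have 2: "closure {y. tn y \<le> real (nat \<lceil>tn x\<rceil>)} \<in> range (\<lambda>N::nat. closure {y. tn y \<le> real N})"
        by (rule rangeI)
      show "x \<in> \<Union>(range (\<lambda>N::nat. closure {x. tn x \<le> real N}))"
        by (rule UnionI[OF 2 1])
    qed
  qed
  ultimately show False by simp
qed

lemma tn_approx: "\<exists>K>0. \<forall>h \<eta>. \<eta> > 0 \<longrightarrow> (\<exists>g. tn g \<le> K * norm h \<and> norm (h - g) < \<eta>)"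
proof -
  obtain N :: nat and x0 r where r: "r > 0" and B: "ball x0 r \<subseteq> closure {x. tn x \<le> real N}"
    using tn_baire by blast
  let ?C = "{x. tn x \<le> real N}"
  have small: "\<exists>g. tn g \<le> real N \<and> norm (h - g) < \<eta>" if "norm h < r" "\<eta> > 0" for h \<eta>
  proof -
    have "x0 + h \<in> closure ?C" "x0 - h \<in> closure ?C" using B that by (auto simp: dist_norm)
    then have "\<exists>g\<in>?C. dist g (x0 + h) < \<eta>" "\<exists>g\<in>?C. dist g (x0 - h) < \<eta>"
      using \<open>\<eta> > 0\<close> unfolding closure_approachable by blast+
    then obtain g1 g2 where g1: "g1 \<in> ?C" "dist g1 (x0 + h) < \<eta>" and g2: "g2 \<in> ?C" "dist g2 (x0 - h) < \<eta>"
      by blast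
    define g where "g = (1/2) *\<^sub>R (g1 - g2)"
    have "tn g \<le> (1/2) * tn (g1 - g2)" unfolding g_def using tn_scale[of "1/2" "g1 - g2"] by simp
    also have "\<dots> \<le> (1/2) * (tn g1 + tn g2)" using tn_diff[of g1 g2] by simp
    also have "\<dots> \<le> real N" using g1 g2 by simp
    finally have "tn g \<le> real N" .
    moreover have "h - g = (1/2) *\<^sub>R ((x0 + h - g1) - (x0 - h - g2))" unfolding g_def by (simp add: algebra_simps) (simp flip: scaleR_add_left)
    then have "norm (h - g) = \<bar>1/2\<bar> * norm ((x0 + h - g1) - (x0 - h - g2))"
      by (simp only: norm_scaleR)
    then have "norm (h - g) \<le> (1/2) * (norm (x0 + h - g1) + norm (x0 - h - g2))"
      using norm_triangle_ineq4[of "x0 + h - g1" "x0 - h - g2"] by simp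
    then have "norm (h - g) < \<eta>" using g1 g2 by (simp add: dist_norm norm_minus_commute)
    ultimately show ?thesis by blast
  qed
  define K where "K = 2 * real N / r + 1"
  have "0 \<le> 2 * real N / r" using r by simp
  then have K: "K > 0" unfolding K_def by linarith
  show ?thesis
  proof (intro exI[of _ K] conjI K allI impI)
    fix h :: 'a and \<eta> :: real assume "\<eta> > 0"
    show "\<exists>g. tn g \<le> K * norm h \<and> norm (h - g) < \<eta>"
    proof (cases "h = 0")
      case True then show ?thesis using \<open>\<eta>>0\<close> by (intro exI[of _ 0]) (simp add: tn_zero)
    next
      case False
      then have nh: "norm h > 0" by simp
      define c where "c = r / (2 * norm h)"
      have c: "c > 0" unfolding c_def using r nh by simp
      have "norm (c *\<^sub>R h) < r" unfolding c_def using r nh by simp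
      then obtain g' where g': "tn g' \<le> real N" "norm (c *\<^sub>R h - g') < \<eta> * c"
        using small[of "c *\<^sub>R h" "\<eta> * c"] \<open>\<eta>>0\<close> c by auto
      define g where "g = (1/c) *\<^sub>R g'"
      have "tn g \<le> (1/c) * tn g'" unfolding g_def using tn_scale[of "1/c" g'] c by simp
      also have "\<dots> \<le> (1/c) * real N" using g' c by (simp add: divide_right_mono)
      also have "\<dots> = 2 * real N / r * norm h" unfolding c_def using r nh by (simp add: field_simps)
      also have "\<dots> \<le> K * norm h" unfolding K_def using nh by (simp add: distrib_right)
      finally have "tn g \<le> K * norm h" .
      moreover have "h - g = (1/c) *\<^sub>R (c *\<^sub>R h - g')" unfolding g_def using c by (simp add: algebra_simps)
      then have "norm (h - g) = (1/c) * norm (c *\<^sub>R h - g')" using c by simp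
      then have "c * norm (h - g) = norm (c *\<^sub>R h - g')" using c by simp
      then have "c * norm (h - g) < c * \<eta>" using g'(2) by (simp add: mult.commute)
      then have "norm (h - g) < \<eta>" using c by simp
      ultimately show ?thesis by blast
    qed
  qed
qed

lemma geom_half: "l \<le> j \<Longrightarrow> (\<Sum>i\<in>{l..<j}. (1/2::real)^i) = 2 * (1/2)^l - 2 * (1/2)^j"
proof (induction j rule: dec_induct)
  case base then show ?case by simp
next
  case (step j) then show ?case by (simp add: sum.atLeastLessThan_Suc)
qed

lemma tn_bounded: "\<exists>C>0. \<forall>x. tn x \<le> C * norm x"
proof -
  obtain K where K: "K > 0" and app: "\<And>h \<eta>. \<eta> > 0 \<Longrightarrow> \<exists>g. tn g \<le> K * norm h \<and> norm (h - g) < \<eta>"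
    using tn_approx by blast
  define gsel where "gsel h' \<eta> = (SOME g. tn g \<le> K * norm h' \<and> norm (h' - g) < \<eta>)" for h' \<eta>
  have gsel: "tn (gsel h' \<eta>) \<le> K * norm h' \<and> norm (h' - gsel h' \<eta>) < \<eta>" if "\<eta> > 0" for h' \<eta>
    unfolding gsel_def by (rule someI_ex) (rule app[OF that])
  have main: "tn h \<le> 2 * K * norm h" for h
  proof (cases "h = 0")
    case True then show ?thesis by (simp add: tn_zero)
  next
    case False
    then have nh: "norm h > 0" by simp
    define \<eta> where "\<eta> j = norm h * (1/2)^(Suc j)" for j
    have \<eta>pos: "\<eta> j > 0" for j unfolding \<eta>_def using nh by simp
    define hs where "hs = rec_nat h (\<lambda>j hj. hj - gsel hj (\<eta> j))"
    have hs0: "hs 0 = h" and hsS: "hs (Suc j) = hs j - gsel (hs j) (\<eta> j)" for j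
      unfolding hs_def by simp_all
    define gs where "gs j = gsel (hs j) (\<eta> j)" for j
    have hsn: "norm (hs j) \<le> norm h * (1/2)^j" for j
    proof (cases j)
      case 0 then show ?thesis by (simp add: hs0)
    next
      case (Suc i)
      have "norm (hs (Suc i)) < \<eta> i" using gsel[OF \<eta>pos[of i], of "hs i"] by (simp add: hsS)
      then show ?thesis using Suc \<eta>_def by simp
    qed
    have gsn: "tn (gs j) \<le> K * norm h * (1/2)^j" for j
    proof -
      have "tn (gs j) \<le> K * norm (hs j)" using gsel[OF \<eta>pos[of j], of "hs j"] by (simp add: gs_def)
      also have "\<dots> \<le> K * (norm h * (1/2)^j)" using hsn[of j] K by (simp add: mult_left_mono)
      finally show ?thesis by simp
    qed
    define G where "G J = (\<Sum>j<J. gs j)" for J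
    have hG: "h - G J = hs J" for J
      by (induction J) (simp_all add: G_def hs0 hsS gs_def)
    have tnG: "tn (\<Sum>i\<in>{l..<j}. gs i) \<le> 2 * K * norm h * (1/2)^l" if "l \<le> j" for l j
    proof -
      have "tn (\<Sum>i\<in>{l..<j}. gs i) \<le> (\<Sum>i\<in>{l..<j}. tn (gs i))" by (rule tn_sum)
      also have "\<dots> \<le> (\<Sum>i\<in>{l..<j}. K * norm h * (1/2)^i)" by (rule sum_mono) (rule gsn)
      also have "\<dots> = K * norm h * (\<Sum>i\<in>{l..<j}. (1/2)^i)" by (simp add: sum_distrib_left)
      also have "\<dots> = K * norm h * (2 * (1/2)^l - 2 * (1/2)^j)" using geom_half[OF that] by simp
      also have "\<dots> \<le> 2 * K * norm h * (1/2)^l" using K nh by (simp add: mult_left_mono)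
      finally show ?thesis .
    qed
    have Gdiff: "G j - G l = (\<Sum>i\<in>{l..<j}. gs i)" if "l \<le> j" for l j
      unfolding G_def using sum_diff_nat_ivl[of 0 l j gs] that by (simp add: lessThan_atLeast0)
    have Cauchy: "\<exists>J. \<forall>j\<ge>J. \<forall>l\<ge>J. tn (G j - G l) < \<epsilon>" if eps: "\<epsilon> > 0" for \<epsilon>
    proof -
      obtain J where J: "(1/2::real)^J < \<epsilon> / (2 * K * norm h + 1)"
      proof -
        have "0 \<le> 2 * K * norm h" using K by simp
        then have "0 < 2 * K * norm h + 1" by linarith
        then have "0 < \<epsilon> / (2 * K * norm h + 1)" using eps by simp
        then show ?thesis using real_arch_pow_inv[of "\<epsilon> / (2 * K * norm h + 1)" "1/2"] that by auto
      qed
      have J': "2 * K * norm h * (1/2::real)^J < \<epsilon>"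
      proof -
        have "0 \<le> 2 * K * norm h" using K by simp
        then have pos: "0 < 2 * K * norm h + 1" by linarith
        have "2 * K * norm h * (1/2::real)^J \<le> (2 * K * norm h + 1) * (1/2)^J" by simp
        also have "\<dots> < (2 * K * norm h + 1) * (\<epsilon> / (2 * K * norm h + 1))"
          using J pos by (intro mult_strict_left_mono) auto
        also have "\<dots> = \<epsilon>" using pos by simp
        finally show ?thesis .
      qed
      have pw: "(1/2::real)^l \<le> (1/2)^J" if "J \<le> l" for l using that by (simp add: power_decreasing)
      show ?thesis
      proof (intro exI[of _ J] allI impI)
        fix j l assume "J \<le> j" "J \<le> l"
        show "tn (G j - G l) < \<epsilon>"
        proof (cases "l \<le> j")
          case True
          have "tn (G j - G l) \<le> 2 * K * norm h * (1/2)^l" using Gdiff[OF True] tnG[OF True] by simp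
          also have "\<dots> \<le> 2 * K * norm h * (1/2)^J" using pw[OF \<open>J \<le> l\<close>] K nh by (simp add: mult_left_mono)
          finally show ?thesis using J' by simp
        next
          case False then have "j \<le> l" by simp
          have "tn (G j - G l) = tn (G l - G j)" using tn_minus[of "G l - G j"] by simp
          also have "\<dots> \<le> 2 * K * norm h * (1/2)^j" using Gdiff[OF \<open>j \<le> l\<close>] tnG[OF \<open>j \<le> l\<close>] by simp
          also have "\<dots> \<le> 2 * K * norm h * (1/2)^J" using pw[OF \<open>J \<le> j\<close>] K nh by (simp add: mult_left_mono)
          finally show ?thesis using J' by simp
        qed
      qed
    qed
    obtain x where x: "\<forall>\<epsilon>>0. \<exists>J. \<forall>j\<ge>J. tn (G j - x) \<le> \<epsilon>"
      using tn_complete[of G] Cauchy by blast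
    have Gx: "G \<longlonglongrightarrow> x"
    proof (rule LIMSEQ_I)
      fix r :: real assume "r > 0"
      then obtain J where "\<forall>j\<ge>J. tn (G j - x) \<le> r/2" using x by (meson half_gt_zero)
      then show "\<exists>no. \<forall>n\<ge>no. norm (G n - x) < r"
      proof (intro exI allI impI)
        fix n assume "J \<le> n"
        have "norm (G n - x) \<le> tn (G n - x)" by (rule norm_le_tn)
        also have "\<dots> \<le> r/2" using \<open>\<forall>j\<ge>J. tn (G j - x) \<le> r/2\<close> \<open>J \<le> n\<close> by blast
        finally show "norm (G n - x) < r" using \<open>r>0\<close> by simp
      qed
    qed
    have Gh: "G \<longlonglongrightarrow> h"
    proof -
      have "(\<lambda>j. norm h * (1/2::real)^j) \<longlonglongrightarrow> norm h * 0"
        by (intro tendsto_intros) simp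
      then have g0: "(\<lambda>j. norm h * (1/2::real)^j) \<longlonglongrightarrow> 0" by simp
      have ev: "\<forall>\<^sub>F j in sequentially. norm (norm (hs j)) \<le> norm h * (1/2::real)^j"
        by (intro always_eventually allI) (simp add: hsn)
      have "(\<lambda>j. norm (hs j)) \<longlonglongrightarrow> 0"
        by (rule Lim_null_comparison[OF ev g0])
      then have "hs \<longlonglongrightarrow> 0" by (simp only: tendsto_norm_zero_iff)
      then have "(\<lambda>j. h - G j) \<longlonglongrightarrow> 0" by (simp only: hG)
      then have "(\<lambda>j. h - (h - G j)) \<longlonglongrightarrow> h - 0" by (intro tendsto_intros)
      then show ?thesis by simp
    qed
    have xh: "x = h" using LIMSEQ_unique[OF Gx Gh] .
    have tG: "tn (G j) \<le> 2 * K * norm h" for j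
    proof -
      have "tn (G j) \<le> 2 * K * norm h * (1/2)^0" using tnG[of 0 j] unfolding G_def
        by (simp add: lessThan_atLeast0)
      then show ?thesis by simp
    qed
    show ?thesis
    proof (rule field_le_epsilon)
      fix \<epsilon> :: real assume "\<epsilon> > 0"
      then obtain J where J: "tn (G J - x) \<le> \<epsilon>" using x by blast
      have "tn h \<le> tn (h - G J) + tn (G J)" using tn_add[of "h - G J" "G J"] by simp
      also have "tn (h - G J) = tn (G J - x)" using xh tn_minus[of "G J - h"] by simp
      finally show "tn h \<le> 2 * K * norm h + \<epsilon>" using J tG[of J] by simp
    qed
  qed
  show ?thesis using main K by (intro exI[of _ "2*K"]) auto
qed

lemma coef_bounded_linear: "bounded_linear (\<lambda>x. coef x i)"
proof -
  obtain C where C: "C > 0" "\<And>x. tn x \<le> C * norm x" using tn_bounded by blast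
  have ne: "norm (e i) > 0" using e_nonzero by simp
  show ?thesis
  proof (rule bounded_linear_intro)
    show "coef (x + y) i = coef x i + coef y i" for x y by (rule coef_add)
    show "coef (r *\<^sub>R x) i = r *\<^sub>R coef x i" for r x by (simp add: coef_scale)
    show "norm (coef x i) \<le> norm x * (2 * C / norm (e i))" for x
    proof -
      have "\<bar>coef x i\<bar> * norm (e i) \<le> 2 * (C * norm x)" using coef_bound[of x i] C(2)[of x] by linarith
      then show ?thesis using ne by (simp add: field_simps)
    qed
  qed
qed

end

definition Cyl :: "nat \<Rightarrow> nat set \<Rightarrow> nat set set" where
  "Cyl N t = {A. \<forall>i\<le>N. (i \<in> A) = (i \<in> t)}"

lemma Cyl_mono: "N \<le> N' \<Longrightarrow> Cyl N' t \<subseteq> Cyl N t"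
  unfolding Cyl_def by auto

lemma Cyl_self: "t \<in> Cyl N t" unfolding Cyl_def by auto

lemma cantor_topspace: "topspace cantor_topology = UNIV"
  unfolding cantor_topology_def topology_generated_by_topspace by auto

lemma Cyl_open: "openin cantor_topology (Cyl N t)"
proof -
  have eq: "Cyl N t = \<Inter> ((\<lambda>i. if i \<in> t then {A. i \<in> A} else {A. i \<notin> A}) ` {..N})"
    by (auto simp: Cyl_def split: if_splits)
  show ?thesis
    unfolding cantor_topology_def openin_topology_generated_by_iff eq
    by (rule generate_topology_on_Inter) (auto intro: generate_topology_on.Basis)
qed

lemma open_Cyl_aux:
  assumes "generate_topology_on ({{A. n \<in> A} | n. True} \<union> {{A. n \<notin> A} | n. True}) U"
  shows "\<forall>t\<in>U. \<exists>N. Cyl N t \<subseteq> U"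
  using assms
proof induction
  case Empty then show ?case by simp
next
  case (Int a b)
  show ?case
  proof
    fix t assume "t \<in> a \<inter> b"
    then obtain N1 N2 where "Cyl N1 t \<subseteq> a" "Cyl N2 t \<subseteq> b" using Int.IH by blast
    then have "Cyl (max N1 N2) t \<subseteq> a \<inter> b" using Cyl_mono[of N1 "max N1 N2" t] Cyl_mono[of N2 "max N1 N2" t] by auto
    then show "\<exists>N. Cyl N t \<subseteq> a \<inter> b" by blast
  qed
next
  case (UN K)
  show ?case
  proof
    fix t assume "t \<in> \<Union>K"
    then obtain k where "k \<in> K" "t \<in> k" by blast
    then obtain N where "Cyl N t \<subseteq> k" using UN.IH by blast
    then show "\<exists>N. Cyl N t \<subseteq> \<Union>K" using \<open>k \<in> K\<close> by blast
  qed
next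
  case (Basis s)
  then obtain n where "s = {A. n \<in> A} \<or> s = {A. n \<notin> A}" by blast
  then show ?case unfolding Cyl_def by auto
qed

lemma open_Cyl: "openin cantor_topology U \<Longrightarrow> t \<in> U \<Longrightarrow> \<exists>N. Cyl N t \<subseteq> U"
  using open_Cyl_aux unfolding cantor_topology_def openin_topology_generated_by_iff by blast

lemma cont_at_cyl:
  assumes h: "continuous_map (subtopology cantor_topology S) euclideanreal h" and t: "t \<in> S" and e: "\<epsilon> > 0"
  shows "\<exists>N. \<forall>s\<in>S. s \<in> Cyl N t \<longrightarrow> \<bar>h s - h t\<bar> < \<epsilon>"
proof -
  have "openin (subtopology cantor_topology S) {x \<in> topspace (subtopology cantor_topology S). h x \<in> ball (h t) \<epsilon>}"
    using h by (rule openin_continuous_map_preimage) (simp add: open_ball)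
  moreover have tS: "topspace (subtopology cantor_topology S) = S" by (simp add: cantor_topspace)
  ultimately obtain T where T: "openin cantor_topology T" "{x \<in> S. h x \<in> ball (h t) \<epsilon>} = T \<inter> S"
    unfolding openin_subtopology by auto
  have "t \<in> {x \<in> S. h x \<in> ball (h t) \<epsilon>}" using t e by simp
  then have "t \<in> T" using T(2) by (simp only: Int_iff)
  then obtain N where N: "Cyl N t \<subseteq> T" using open_Cyl T(1) by blast
  show ?thesis
  proof (intro exI[of _ N] ballI impI)
    fix s assume "s \<in> S" "s \<in> Cyl N t"
    then have "s \<in> T \<inter> S" using N by blast
    then have "s \<in> {x \<in> S. h x \<in> ball (h t) \<epsilon>}" using T(2) by (simp only:)
    then have "h s \<in> ball (h t) \<epsilon>" by simp
    then show "\<bar>h s - h t\<bar> < \<epsilon>" by (simp add: dist_real_def abs_minus_commute)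
  qed
qed

lemma cyl_cont:
  assumes H: "\<And>t \<epsilon>. t \<in> S \<Longrightarrow> \<epsilon> > 0 \<Longrightarrow> \<exists>N. \<forall>s\<in>S. s \<in> Cyl N t \<longrightarrow> \<bar>h s - h t\<bar> < \<epsilon>"
  shows "continuous_map (subtopology cantor_topology S) euclideanreal h"
  unfolding continuous_map_def
proof (intro conjI allI impI)
  have tS: "topspace (subtopology cantor_topology S) = S" by (simp add: cantor_topspace)
  show "h \<in> topspace (subtopology cantor_topology S) \<rightarrow> topspace euclideanreal" by simp
  fix U :: "real set" assume "openin euclideanreal U"
  then have oU: "open U" by simp
  show "openin (subtopology cantor_topology S) {x \<in> topspace (subtopology cantor_topology S). h x \<in> U}"
    unfolding tS
  proof (subst openin_subopen, intro ballI)
    fix t assume "t \<in> {x \<in> S. h x \<in> U}"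
    then have t: "t \<in> S" "h t \<in> U" by auto
    then obtain \<epsilon> where e: "\<epsilon> > 0" "ball (h t) \<epsilon> \<subseteq> U" using oU open_contains_ball by blast
    obtain N where N: "\<forall>s\<in>S. s \<in> Cyl N t \<longrightarrow> \<bar>h s - h t\<bar> < \<epsilon>" using H t(1) e(1) by blast
    show "\<exists>T. openin (subtopology cantor_topology S) T \<and> t \<in> T \<and> T \<subseteq> {x \<in> S. h x \<in> U}"
    proof (intro exI conjI)
      show "openin (subtopology cantor_topology S) (Cyl N t \<inter> S)"
        unfolding openin_subtopology using Cyl_open by blast
      show "t \<in> Cyl N t \<inter> S" using t Cyl_self by blast
      show "Cyl N t \<inter> S \<subseteq> {x \<in> S. h x \<in> U}"
      proof
        fix s assume "s \<in> Cyl N t \<inter> S"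
        then have "\<bar>h s - h t\<bar> < \<epsilon>" using N by blast
        then have "h s \<in> ball (h t) \<epsilon>" by (simp add: dist_real_def abs_minus_commute)
        then show "s \<in> {x \<in> S. h x \<in> U}" using e(2) \<open>s \<in> Cyl N t \<inter> S\<close> by blast
      qed
    qed
  qed
qed

lemma weak_topspace: "topspace (weak_topology :: 'a::real_normed_vector topology) = UNIV"
proof -
  have "(\<lambda>x::'a. 0::real) -` UNIV \<in> {f -` U | f U. bounded_linear (f :: 'a \<Rightarrow> real) \<and> open U}"
    using bounded_linear_zero by blast
  then show ?thesis unfolding weak_topology_def topology_generated_by_topspace by auto
qed

lemma weak_cont_comp:
  assumes "continuous_map X weak_topology g" "bounded_linear (f :: 'a::real_normed_vector \<Rightarrow> real)"
  shows "continuous_map X euclideanreal (f \<circ> g)"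
proof (rule continuous_map_compose[OF assms(1)])
  show "continuous_map weak_topology euclideanreal f"
    unfolding continuous_map_def weak_topspace
  proof (intro conjI allI impI)
    show "f \<in> UNIV \<rightarrow> topspace euclideanreal" by simp
    fix U :: "real set" assume "openin euclideanreal U"
    then have "f -` U \<in> {f -` U | f U. bounded_linear (f :: 'a \<Rightarrow> real) \<and> open U}" using assms(2) by auto
    then have "openin weak_topology (f -` U)" unfolding weak_topology_def by (rule topology_generated_by_Basis)
    then show "openin weak_topology {x \<in> UNIV. f x \<in> U}" by (simp add: vimage_def)
  qed
qed

lemma weak_cont_intro:
  assumes H: "\<And>f. bounded_linear (f :: 'a::real_normed_vector \<Rightarrow> real) \<Longrightarrow> continuous_map X euclideanreal (f \<circ> g)"
  shows "continuous_map X weak_topology g"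
  unfolding continuous_map_def weak_topspace
proof (intro conjI allI impI)
  show "g \<in> topspace X \<rightarrow> UNIV" by simp
  fix U :: "'a set" assume "openin weak_topology U"
  then have "generate_topology_on {f -` U | f U. bounded_linear (f :: 'a \<Rightarrow> real) \<and> open U} U"
    unfolding weak_topology_def by (rule openin_topology_generated_by)
  then show "openin X {x \<in> topspace X. g x \<in> U}"
  proof induction
    case Empty then show ?case by simp
  next
    case (Int a b)
    have "{x \<in> topspace X. g x \<in> a \<inter> b} = {x \<in> topspace X. g x \<in> a} \<inter> {x \<in> topspace X. g x \<in> b}" by auto
    then show ?case using openin_Int[OF Int.IH] by simp
  next
    case (UN K)
    have "{x \<in> topspace X. g x \<in> \<Union>K} = \<Union>((\<lambda>k. {x \<in> topspace X. g x \<in> k}) ` K)" by auto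
    then show ?case using UN.IH by (simp only:) (rule openin_Union, blast)
  next
    case (Basis s)
    then have "\<exists>f V. s = f -` V \<and> bounded_linear (f :: 'a \<Rightarrow> real) \<and> open V" by simp
    then obtain f V where sfV: "s = f -` V \<and> bounded_linear (f :: 'a \<Rightarrow> real) \<and> open V" by iprover
    then have s: "s = f -` V" and f: "bounded_linear f" and V: "open V" by auto
    have "openin X {x \<in> topspace X. (f \<circ> g) x \<in> V}"
      using H[OF f] by (rule openin_continuous_map_preimage) (simp add: V)
    then show ?case using s by simp
  qed
qed

abbreviation sl :: "nat set \<Rightarrow> nat list" where "sl s \<equiv> sorted_list_of_set s"

lemma restr_sub: "finite s \<Longrightarrow> restr s j \<subseteq> s"
  unfolding restr_def using set_take_subset[of j "sl s"] by simp

lemma restr_0: "restr s 0 = {}" by (simp add: restr_def)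

lemma restr_full: "finite s \<Longrightarrow> card s \<le> j \<Longrightarrow> restr s j = s"
  unfolding restr_def by simp

lemma finite_restr: "finite (restr s j)" by (simp add: restr_def)

lemma card_restr: "finite s \<Longrightarrow> card (restr s j) = min j (card s)"
  unfolding restr_def by (simp add: distinct_card)

lemma restr_Suc: "finite s \<Longrightarrow> j < card s \<Longrightarrow> restr s (Suc j) = insert (sl s ! j) (restr s j)"
  unfolding restr_def by (simp add: take_Suc_conv_app_nth)

lemma sl_less: "finite s \<Longrightarrow> i < j \<Longrightarrow> j < card s \<Longrightarrow> sl s ! i < sl s ! j"
  using sorted_wrt_nth_less[OF strict_sorted_list_of_set[of s]] by simp

lemma sl_le: "finite s \<Longrightarrow> i \<le> j \<Longrightarrow> j < card s \<Longrightarrow> sl s ! i \<le> sl s ! j"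
  using sl_less[of s i j] by (cases "i = j") auto

lemma sl_in: "finite s \<Longrightarrow> j < card s \<Longrightarrow> sl s ! j \<in> s"
  using nth_mem[of j "sl s"] by simp

lemma restr_less: "finite s \<Longrightarrow> j < card s \<Longrightarrow> a \<in> restr s j \<Longrightarrow> a < sl s ! j"
  unfolding restr_def
proof -
  assume f: "finite s" and j: "j < card s" and a: "a \<in> set (take j (sl s))"
  then obtain i where "i < length (take j (sl s))" "a = take j (sl s) ! i" by (auto simp: in_set_conv_nth)
  then have "i < j" "a = sl s ! i" using j f by auto
  then show "a < sl s ! j" using sl_less[OF f \<open>i < j\<close> j] by simp
qed

lemma Max_restr: "finite s \<Longrightarrow> j < card s \<Longrightarrow> Max (restr s (Suc j)) = sl s ! j"
proof -
  assume f: "finite s" and j: "j < card s"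
  show ?thesis unfolding restr_Suc[OF f j]
    by (rule Max_eqI) (use restr_less[OF f j] finite_restr in \<open>auto intro: less_imp_le\<close>)
qed

lemma restr_nonempty: "finite s \<Longrightarrow> j < card s \<Longrightarrow> restr s (Suc j) \<noteq> {}"
  using restr_Suc by auto

lemma restr_pred: "finite s \<Longrightarrow> j < card s \<Longrightarrow> restr s j = restr s (Suc j) - {Max (restr s (Suc j))}"
proof -
  assume f: "finite s" and j: "j < card s"
  have "sl s ! j \<notin> restr s j" using restr_less[OF f j] by blast
  moreover have "restr s (Suc j) - {Max (restr s (Suc j))} = insert (sl s ! j) (restr s j) - {sl s ! j}"
    using Max_restr[OF f j] restr_Suc[OF f j] by simp
  ultimately show ?thesis by auto
qed

lemma sl_strict: "sorted_wrt (<) (sl A)"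
  using strict_sorted_list_of_set[of A] by simp

lemma sl_split:
  assumes f: "finite s"
  shows "sl s = sl {a\<in>s. a \<le> N} @ sl {a\<in>s. N < a}"
proof -
  let ?t = "{a\<in>s. a \<le> N}" and ?r = "{a\<in>s. N < a}"
  have ft: "finite ?t" "finite ?r" using f by auto
  have st: "set (sl ?t) = ?t" "set (sl ?r) = ?r" using ft by simp_all
  have "\<forall>x\<in>set (sl ?t). \<forall>y\<in>set (sl ?r). x < y" unfolding st by auto
  then have 1: "sorted_wrt (<) (sl ?t @ sl ?r)"
    unfolding sorted_wrt_append using sl_strict[of ?t] sl_strict[of ?r] by (intro conjI)
  have 2: "set (sl ?t @ sl ?r) = set (sl s)" unfolding set_append st using f by auto
  show ?thesis by (rule strict_sorted_equal[OF sl_strict 1 2, symmetric])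
qed

lemma restr_cyl:
  assumes f: "finite s" and j: "j \<le> card {a\<in>s. a \<le> N}"
  shows "restr s j = restr {a\<in>s. a \<le> N} j"
proof -
  have l: "length (sl {a\<in>s. a \<le> N}) = card {a\<in>s. a \<le> N}" by simp
  have "take j (sl s) = take j (sl {a\<in>s. a \<le> N})"
    unfolding sl_split[OF f, of N] take_append using j l by simp
  then show ?thesis unfolding restr_def by simp
qed

lemma restr_cyl2:
  assumes f: "finite s" and j: "card {a\<in>s. a \<le> N} \<le> j" "j < card s"
  shows "N < sl s ! j"
proof -
  let ?t = "{a\<in>s. a \<le> N}" and ?r = "{a\<in>s. N < a}"
  have ft: "finite ?t" "finite ?r" using f by auto
  have "card s = card ?t + card ?r"
  proof -
    have "s = ?t \<union> ?r" by auto
    moreover have "?t \<inter> ?r = {}" by auto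
    ultimately show ?thesis using ft card_Un_disjoint by metis
  qed
  then have "j - card ?t < length (sl ?r)" using j by simp
  then have "sl ?r ! (j - card ?t) \<in> ?r" using nth_mem[of "j - card ?t" "sl ?r"] ft by simp
  moreover have "sl s ! j = sl ?r ! (j - card ?t)"
  proof -
    have l: "length (sl ?t) = card ?t" by simp
    show ?thesis unfolding sl_split[OF f, of N] nth_append l using j(1) by simp
  qed
  ultimately show ?thesis by simp
qed

locale constr = sbasis e for e :: "nat \<Rightarrow> 'a::banach" +
  fixes k :: nat and x :: "nat set \<Rightarrow> 'a" and \<epsilon> :: "nat \<Rightarrow> real" and M :: "nat set"
    and \<phi> :: "nat set \<Rightarrow> 'a"
  assumes epos: "\<forall>n. \<epsilon> n > 0" and elim: "\<epsilon> \<longlonglongrightarrow> 0" and Minf: "infinite M"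
    and sub: "subordinated M k x \<phi>"
begin

definition FM :: "nat filter" where "FM = inf sequentially (principal M)"

lemma phi_cont: "bounded_linear (f :: 'a \<Rightarrow> real) \<Longrightarrow> continuous_map (subtopology cantor_topology (nsets_le M k)) euclideanreal (f \<circ> \<phi>)"
  using sub unfolding subordinated_def by (blast intro: weak_cont_comp)

lemma insert_nsets_le: "t \<in> nsets_le M k \<Longrightarrow> card t < k \<Longrightarrow> m \<in> M \<Longrightarrow> insert m t \<in> nsets_le M k"
  unfolding nsets_le_def using card_insert_if[of t m] by auto

lemma E1:
  fixes f :: "'a \<Rightarrow> real"
  assumes t: "t \<in> nsets_le M k" "card t < k" and f: "bounded_linear f"
  shows "((\<lambda>m. f (\<phi> (insert m t))) \<longlongrightarrow> f (\<phi> t)) FM"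
proof (rule tendstoI)
  fix \<eta> :: real assume "\<eta> > 0"
  obtain N where N: "\<forall>s\<in>nsets_le M k. s \<in> Cyl N t \<longrightarrow> \<bar>(f \<circ> \<phi>) s - (f \<circ> \<phi>) t\<bar> < \<eta>"
    using cont_at_cyl[OF phi_cont[OF f] t(1) \<open>\<eta> > 0\<close>] by blast
  have "\<forall>m\<ge>Suc N. m \<in> M \<longrightarrow> dist (f (\<phi> (insert m t))) (f (\<phi> t)) < \<eta>"
  proof (intro allI impI)
    fix m assume "Suc N \<le> m" "m \<in> M"
    have "insert m t \<in> Cyl N t" unfolding Cyl_def using \<open>Suc N \<le> m\<close> by auto
    moreover have "insert m t \<in> nsets_le M k" by (rule insert_nsets_le[OF t \<open>m \<in> M\<close>])
    ultimately show "dist (f (\<phi> (insert m t))) (f (\<phi> t)) < \<eta>" using N by (simp add: dist_real_def)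
  qed
  then show "\<forall>\<^sub>F m in FM. dist (f (\<phi> (insert m t))) (f (\<phi> t)) < \<eta>"
    unfolding FM_def eventually_inf_principal eventually_sequentially by blast
qed

lemma head:
  assumes A: "finite A" "A \<subseteq> M" and \<delta>: "\<delta> > 0"
  shows "\<forall>\<^sub>F m in FM. \<forall>u'\<in>{u'. u' \<subseteq> A \<and> card u' < k}. norm (P p (\<phi> (insert m u') - \<phi> u')) < \<delta>"
proof (rule eventually_ball_finite)
  show "finite {u'. u' \<subseteq> A \<and> card u' < k}" using A(1) by simp
  show "\<forall>u'\<in>{u'. u' \<subseteq> A \<and> card u' < k}. \<forall>\<^sub>F m in FM. norm (P p (\<phi> (insert m u') - \<phi> u')) < \<delta>"
  proof
    fix u' assume "u' \<in> {u'. u' \<subseteq> A \<and> card u' < k}"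
    then have u': "u' \<in> nsets_le M k" "card u' < k" using A unfolding nsets_le_def
      by (auto intro: finite_subset)
    have eq: "P p (\<phi> (insert m u') - \<phi> u') = (\<Sum>i<p. (coef (\<phi> (insert m u')) i - coef (\<phi> u') i) *\<^sub>R e i)" for m
      by (simp add: P_def coef_diff)
    have "((\<lambda>m. (\<Sum>i<p. (coef (\<phi> (insert m u')) i - coef (\<phi> u') i) *\<^sub>R e i)) \<longlongrightarrow>
        (\<Sum>i<p. (coef (\<phi> u') i - coef (\<phi> u') i) *\<^sub>R e i)) FM"
      by (intro tendsto_intros E1[OF u' coef_bounded_linear])
    then have "((\<lambda>m. P p (\<phi> (insert m u') - \<phi> u')) \<longlongrightarrow> 0) FM" unfolding eq by simp
    then show "\<forall>\<^sub>F m in FM. norm (P p (\<phi> (insert m u') - \<phi> u')) < \<delta>"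
      using \<delta> by (auto dest: tendstoD simp: dist_norm)
  qed
qed

lemma tail:
  assumes V: "finite V" and \<delta>: "\<delta> > 0"
  shows "\<exists>q\<ge>p. \<forall>v\<in>V. norm (v - P q v) < \<delta>"
proof -
  have "\<forall>\<^sub>F q in sequentially. \<forall>v\<in>V. norm (v - P q v) < \<delta>"
  proof (rule eventually_ball_finite[OF V], rule ballI)
    fix v assume "v \<in> V"
    show "\<forall>\<^sub>F q in sequentially. norm (v - P q v) < \<delta>"
      using tendstoD[OF P_lim[of v] \<delta>] by (simp add: dist_norm norm_minus_commute)
  qed
  moreover have "\<forall>\<^sub>F q in sequentially. p \<le> q" by (rule eventually_ge_at_top)
  ultimately have "\<forall>\<^sub>F q in sequentially. p \<le> q \<and> (\<forall>v\<in>V. norm (v - P q v) < \<delta>)"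
    by (rule eventually_conj[rotated])
  then obtain N where "\<forall>q\<ge>N. p \<le> q \<and> (\<forall>v\<in>V. norm (v - P q v) < \<delta>)"
    unfolding eventually_sequentially by blast
  then show ?thesis by blast
qed

definition d :: "nat \<Rightarrow> real" where "d n = Min (\<epsilon> ` {..n}) / (real k + 1)"

lemma d_pos: "d n > 0"
  unfolding d_def using epos by (simp add: Min_gr_iff)

lemma d_le: "i \<le> n \<Longrightarrow> d n \<le> \<epsilon> i / (real k + 1)"
  unfolding d_def by (intro divide_right_mono Min_le) auto

lemma d_anti: "n \<le> n' \<Longrightarrow> d n' \<le> d n"
  unfolding d_def by (intro divide_right_mono Min_antimono) auto

lemma d_small: "\<eta> > 0 \<Longrightarrow> \<exists>n0. d n0 < \<eta>"
proof -
  assume "\<eta> > 0"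
  then obtain n where "\<bar>\<epsilon> n - 0\<bar> < \<eta>" using elim unfolding LIMSEQ_def dist_real_def by blast
  then have "\<epsilon> n < \<eta>" by simp
  moreover have "d n \<le> \<epsilon> n / (real k + 1)" by (rule d_le) simp
  moreover have "\<epsilon> n / (real k + 1) \<le> \<epsilon> n" using epos by (simp add: divide_le_eq)
  ultimately show ?thesis by (intro exI[of _ n]) linarith
qed

definition goodm :: "nat \<Rightarrow> nat set \<Rightarrow> nat \<Rightarrow> nat \<Rightarrow> nat \<Rightarrow> bool" where
  "goodm n A p lo m \<longleftrightarrow> m \<in> M \<and> lo \<le> m \<and>
     (\<forall>u'. u' \<subseteq> A \<and> card u' < k \<longrightarrow> norm (P p (\<phi> (insert m u') - \<phi> u')) < d n / 2)"

definition goodq :: "nat \<Rightarrow> nat set \<Rightarrow> nat \<Rightarrow> nat \<Rightarrow> nat \<Rightarrow> bool" where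
  "goodq n A p m q \<longleftrightarrow> p \<le> q \<and>
     (\<forall>u'. u' \<subseteq> A \<and> card u' < k \<longrightarrow>
        norm ((\<phi> (insert m u') - \<phi> u') - P q (\<phi> (insert m u') - \<phi> u')) < d n / 2)"

lemma goodm_ex: "finite A \<Longrightarrow> A \<subseteq> M \<Longrightarrow> \<exists>m. goodm n A p lo m"
proof -
  assume A: "finite A" "A \<subseteq> M"
  have "\<forall>\<^sub>F m in FM. \<forall>u'\<in>{u'. u' \<subseteq> A \<and> card u' < k}. norm (P p (\<phi> (insert m u') - \<phi> u')) < d n / 2"
    by (rule head[OF A]) (simp add: d_pos)
  then obtain N where N: "\<forall>m\<ge>N. m \<in> M \<longrightarrow> (\<forall>u'\<in>{u'. u' \<subseteq> A \<and> card u' < k}. norm (P p (\<phi> (insert m u') - \<phi> u')) < d n / 2)"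
    unfolding FM_def eventually_inf_principal eventually_sequentially by blast
  obtain m where m: "m \<in> M" "max N lo \<le> m" using Minf unfolding infinite_nat_iff_unbounded_le by blast
  then show ?thesis unfolding goodm_def using N by (intro exI[of _ m]) auto
qed

lemma goodq_ex: "finite A \<Longrightarrow> \<exists>q. goodq n A p m q"
proof -
  assume A: "finite A"
  let ?V = "(\<lambda>u'. \<phi> (insert m u') - \<phi> u') ` {u'. u' \<subseteq> A \<and> card u' < k}"
  have "finite ?V" using A by simp
  then obtain q where "q \<ge> p" "\<forall>v\<in>?V. norm (v - P q v) < d n / 2"
    using tail[of ?V "d n / 2" p] d_pos[of n] by auto
  then show ?thesis unfolding goodq_def by (intro exI[of _ q]) auto
qed

definition stepf :: "nat \<Rightarrow> nat set \<times> nat \<times> nat \<Rightarrow> nat set \<times> nat \<times> nat" where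
  "stepf n st = (case st of (A, lo, p) \<Rightarrow>
     let m = (SOME m. goodm n A p lo m) in (insert m A, Suc m, SOME q. goodq n A p m q))"

primrec st :: "nat \<Rightarrow> nat set \<times> nat \<times> nat" where
  "st 0 = ({}, 0, 0)"
| "st (Suc n) = stepf n (st n)"

definition "Aseq n = fst (st n)"
definition "loseq n = fst (snd (st n))"
definition "pseq n = snd (snd (st n))"
definition "mseq n = (SOME m. goodm n (Aseq n) (pseq n) (loseq n) m)"
definition "qseq n = (SOME q. goodq n (Aseq n) (pseq n) (mseq n) q)"

lemma st_Suc':
  "Aseq (Suc n) = insert (mseq n) (Aseq n)" "loseq (Suc n) = Suc (mseq n)" "pseq (Suc n) = qseq n"
proof -
  obtain A lo p where st: "st n = (A, lo, p)" by (cases "st n") auto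
  have 1: "Aseq n = A" "loseq n = lo" "pseq n = p" unfolding Aseq_def loseq_def pseq_def st by simp_all
  show "Aseq (Suc n) = insert (mseq n) (Aseq n)" "loseq (Suc n) = Suc (mseq n)" "pseq (Suc n) = qseq n"
    unfolding Aseq_def loseq_def pseq_def mseq_def qseq_def
    by (simp_all add: st stepf_def Let_def 1[unfolded Aseq_def loseq_def pseq_def])
qed

lemma Aseq_props: "finite (Aseq n) \<and> Aseq n \<subseteq> M"
proof (induction n)
  case 0 then show ?case by (simp add: Aseq_def)
next
  case (Suc n)
  have "goodm n (Aseq n) (pseq n) (loseq n) (mseq n)"
    unfolding mseq_def by (rule someI_ex, rule goodm_ex) (use Suc in auto)
  then have "mseq n \<in> M" unfolding goodm_def by simp
  then show ?case using Suc by (simp add: st_Suc')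
qed

lemma goodm_mseq: "goodm n (Aseq n) (pseq n) (loseq n) (mseq n)"
  unfolding mseq_def by (rule someI_ex, rule goodm_ex) (use Aseq_props in auto)

lemma goodq_qseq: "goodq n (Aseq n) (pseq n) (mseq n) (qseq n)"
  unfolding qseq_def by (rule someI_ex, rule goodq_ex) (use Aseq_props in auto)

lemma Aseq_eq: "Aseq n = mseq ` {..<n}"
  by (induction n) (simp_all add: Aseq_def[of 0] st_Suc' lessThan_Suc)

lemma mseq_M: "mseq n \<in> M" using goodm_mseq unfolding goodm_def by simp

lemma mseq_step: "mseq n < mseq (Suc n)"
  using goodm_mseq[of "Suc n"] unfolding goodm_def st_Suc' by simp

lemma mseq_smono: "strict_mono mseq"
  using mseq_step by (rule strict_mono_Suc_iff[THEN iffD2, rule_format])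

lemma pseq_le_qseq: "pseq n \<le> qseq n" using goodq_qseq unfolding goodq_def by simp

lemma pseq_mono: "n \<le> n' \<Longrightarrow> pseq n \<le> pseq n'"
proof (induction n' rule: dec_induct)
  case base then show ?case by simp
next
  case (step n') then show ?case using pseq_le_qseq[of n'] st_Suc'(3)[of n'] by simp
qed

lemma q_le_p: "n < n' \<Longrightarrow> qseq n \<le> pseq n'"
  using pseq_mono[of "Suc n" n'] st_Suc'(3)[of n] by simp

definition L :: "nat set" where "L = range mseq"

lemma L_sub: "L \<subseteq> M" unfolding L_def using mseq_M by auto

lemma L_inf: "infinite L"
  unfolding L_def using strict_mono_imp_inj_on[OF mseq_smono] range_inj_infinite by blast

definition idx :: "nat \<Rightarrow> nat" where "idx m = (THE n. mseq n = m)"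

lemma idx_mseq [simp]: "idx (mseq n) = n"
  unfolding idx_def by (rule the_equality) (auto dest: strict_mono_eq[OF mseq_smono, THEN iffD1])

lemma mseq_idx: "m \<in> L \<Longrightarrow> mseq (idx m) = m"
  unfolding L_def by auto

lemma idx_less: "m1 \<in> L \<Longrightarrow> m2 \<in> L \<Longrightarrow> m1 < m2 \<Longrightarrow> idx m1 < idx m2"
  using mseq_idx strict_mono_less[OF mseq_smono] by metis

lemma idx_le: "m1 \<in> L \<Longrightarrow> m2 \<in> L \<Longrightarrow> m1 \<le> m2 \<Longrightarrow> idx m1 \<le> idx m2"
  using idx_less by (cases "m1 = m2") (auto simp: less_imp_le)

definition z :: "nat set \<Rightarrow> 'a" where "z u = \<phi> u - \<phi> (u - {Max u})"
definition Pr :: "nat \<Rightarrow> nat \<Rightarrow> 'a \<Rightarrow> 'a" where "Pr a b v = (\<Sum>i\<in>{a..<b}. coef v i *\<^sub>R e i)"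
definition y :: "nat set \<Rightarrow> 'a" where
  "y u = (if u = {} then \<phi> {} else Pr (pseq (idx (Max u))) (qseq (idx (Max u))) (z u))"
definition w :: "nat set \<Rightarrow> 'a" where "w u = z u - y u"
definition xt :: "nat set \<Rightarrow> 'a" where "xt s = (\<Sum>j\<le>card s. y (restr s j))"

lemma Pr_eq: "a \<le> b \<Longrightarrow> Pr a b v = P b v - P a v"
  unfolding Pr_def P_def using sum_diff_nat_ivl[of 0 a b "\<lambda>i. coef v i *\<^sub>R e i"]
  by (simp add: lessThan_atLeast0)

lemma w_bound:
  assumes u: "u \<in> nsets_le L k" "u \<noteq> {}"
  shows "norm (w u) < d (idx (Max u))"
proof -
  let ?m = "Max u" let ?n = "idx (Max u)" let ?u' = "u - {Max u}"
  have fu: "finite u" "u \<subseteq> L" "card u \<le> k" using u unfolding nsets_le_def by auto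
  have mu: "?m \<in> u" using fu u Max_in by blast
  then have mL: "?m \<in> L" using fu by blast
  have mn: "mseq ?n = ?m" by (rule mseq_idx[OF mL])
  have ins: "insert ?m ?u' = u" using mu by blast
  have sub: "?u' \<subseteq> Aseq ?n"
  proof
    fix a assume a: "a \<in> ?u'"
    then have au: "a \<in> u" "a \<noteq> ?m" by auto
    have le: "a \<le> ?m" using fu(1) au(1) by simp
    have "a < ?m" using le au(2) by linarith
    have "a \<in> L" using au(1) fu(2) by blast
    with \<open>a < ?m\<close> have "idx a < ?n" using idx_less mL by blast
    moreover have "a = mseq (idx a)" using mseq_idx[OF \<open>a \<in> L\<close>] by simp
    ultimately show "a \<in> Aseq ?n" unfolding Aseq_eq by blast
  qed
  have cu: "card ?u' < k"
  proof -
    have "card u > 0" using fu u by (simp add: card_gt_0_iff)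
    then show ?thesis using fu mu by (simp add: card_Diff_singleton)
  qed
  have zu: "z u = \<phi> (insert (mseq ?n) ?u') - \<phi> ?u'" unfolding z_def mn ins ..
  have g1: "norm (P (pseq ?n) (z u)) < d ?n / 2"
    using goodm_mseq[of ?n] sub cu unfolding goodm_def zu by blast
  have g2: "norm (z u - P (qseq ?n) (z u)) < d ?n / 2"
    using goodq_qseq[of ?n] sub cu unfolding goodq_def zu by blast
  have "w u = (z u - P (qseq ?n) (z u)) + P (pseq ?n) (z u)"
    unfolding w_def y_def using u(2) Pr_eq[OF pseq_le_qseq] by simp
  then have "norm (w u) \<le> norm (z u - P (qseq ?n) (z u)) + norm (P (pseq ?n) (z u))"
    by (simp add: norm_triangle_ineq)
  then show ?thesis using g1 g2 by simp
qed

lemma supp_y: "u \<noteq> {} \<Longrightarrow> supp e (y u) \<subseteq> {pseq (idx (Max u))..<qseq (idx (Max u))}"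
proof -
  assume "u \<noteq> {}"
  then have "y u = (\<Sum>i\<in>{pseq (idx (Max u))..<qseq (idx (Max u))}. coef (z u) i *\<^sub>R e i)"
    unfolding y_def Pr_def by simp
  then have "basis_coeffs e (y u) = (\<lambda>n. if n \<in> {pseq (idx (Max u))..<qseq (idx (Max u))} then coef (z u) n else 0)"
    using coef_finite[of "{pseq (idx (Max u))..<qseq (idx (Max u))}" "\<lambda>i. coef (z u) i"]
    unfolding coef_def by simp
  then show ?thesis unfolding supp_def by auto
qed

lemma supp_less:
  assumes "finite u1" "u1 \<subseteq> L" "u1 \<noteq> {}" "finite u2" "u2 \<subseteq> L" "u2 \<noteq> {}" "Max u1 < Max u2"
  shows "set_less (supp e (y u1)) (supp e (y u2))"
proof -
  have "Max u1 \<in> L" "Max u2 \<in> L" using assms Max_in by blast+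
  then have "idx (Max u1) < idx (Max u2)" using idx_less assms(7) by blast
  then have "qseq (idx (Max u1)) \<le> pseq (idx (Max u2))" by (rule q_le_p)
  then show ?thesis unfolding set_less_def using supp_y[OF assms(3)] supp_y[OF assms(6)] by fastforce
qed

end

lemma enumerate_range:
  assumes sm: "strict_mono (f :: nat \<Rightarrow> nat)"
  shows "enumerate (range f) n = f n"
proof (induction n rule: less_induct)
  case (less n)
  let ?g = "enumerate (range f)"
  have inf: "infinite (range f)" using strict_mono_imp_inj_on[OF sm] range_inj_infinite by blast
  have gsm: "strict_mono ?g" using enumerate_mono[OF _ inf] by (auto simp: strict_mono_def)
  have rg: "range ?g = range f" using bij_enumerate[OF inf] by (simp add: bij_betw_def)
  obtain m where m: "f n = ?g m" using rg by (metis rangeI imageE)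
  have "\<not> m < n"
  proof
    assume "m < n"
    then have "?g m = f m" using less by simp
    then show False using m \<open>m < n\<close> strict_monoD[OF sm, of m n] by simp
  qed
  then have "?g n \<le> f n" using m strict_mono_leD[OF gsm, of n m] by simp
  obtain m' where m': "?g n = f m'" using rg by (metis rangeI imageE)
  have "\<not> m' < n"
  proof
    assume "m' < n"
    then have "?g m' = f m'" using less by simp
    then show False using m' \<open>m' < n\<close> strict_monoD[OF gsm, of m' n] by simp
  qed
  then have "f n \<le> ?g n" using m' strict_mono_leD[OF sm, of n m'] by simp
  with \<open>?g n \<le> f n\<close> show ?case by simp
qed

context constr begin

lemma xt_empty: "xt {} = \<phi> {}" by (simp add: xt_def restr_0 y_def)

lemma nsets_le_L: "s \<in> nsets_le L k \<Longrightarrow> finite s \<and> s \<subseteq> L \<and> card s \<le> k"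
  unfolding nsets_le_def by auto

lemma restr_in: "s \<in> nsets_le L k \<Longrightarrow> restr s j \<in> nsets_le L k"
  unfolding nsets_le_def using restr_sub finite_restr card_restr by fastforce

lemma tele:
  assumes s: "s \<in> nsets_le L k"
  shows "xt s = \<phi> s - (\<Sum>j<card s. w (restr s (Suc j)))"
proof -
  have fs: "finite s" using s nsets_le_L by blast
  have "xt s = y (restr s 0) + (\<Sum>j<card s. y (restr s (Suc j)))"
    unfolding xt_def by (rule sum.atMost_shift)
  also have "(\<Sum>j<card s. y (restr s (Suc j))) = (\<Sum>j<card s. (\<phi> (restr s (Suc j)) - \<phi> (restr s j)) - w (restr s (Suc j)))"
  proof (rule sum.cong[OF refl])
    fix j assume "j \<in> {..<card s}"
    then have j: "j < card s" by simp
    have "z (restr s (Suc j)) = \<phi> (restr s (Suc j)) - \<phi> (restr s j)"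
      unfolding z_def using restr_pred[OF fs j] by simp
    then show "y (restr s (Suc j)) = (\<phi> (restr s (Suc j)) - \<phi> (restr s j)) - w (restr s (Suc j))"
      unfolding w_def by simp
  qed
  also have "\<dots> = (\<phi> (restr s (card s)) - \<phi> (restr s 0)) - (\<Sum>j<card s. w (restr s (Suc j)))"
    unfolding sum_subtractf[of "\<lambda>j. \<phi> (restr s (Suc j)) - \<phi> (restr s j)" "\<lambda>j. w (restr s (Suc j))"]
      sum_lessThan_telescope[of "\<lambda>j. \<phi> (restr s j)"] ..
  finally show ?thesis using restr_full[OF fs] by (simp add: restr_0 y_def)
qed

lemma enumL: "enumerate L n = mseq n"
  unfolding L_def by (rule enumerate_range[OF mseq_smono])

lemma restr_facts:
  assumes "finite s" "s \<subseteq> L" "j < card s"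
  shows "finite (restr s (Suc j))" "restr s (Suc j) \<subseteq> L" "restr s (Suc j) \<noteq> {}"
    "Max (restr s (Suc j)) = sl s ! j"
  using assms finite_restr restr_sub restr_nonempty Max_restr by blast+

lemma supp_restr:
  assumes "finite s1" "s1 \<subseteq> L" "a < card s1" "finite s2" "s2 \<subseteq> L" "b < card s2"
    "sl s1 ! a < sl s2 ! b"
  shows "set_less (supp e (y (restr s1 (Suc a)))) (supp e (y (restr s2 (Suc b))))"
  by (rule supp_less) (use restr_facts[OF assms(1-3)] restr_facts[OF assms(4-6)] assms(7) in auto)

lemma canon: "canonical_tree_decomposition e L k xt y"
  unfolding canonical_tree_decomposition_def
proof (intro conjI ballI allI impI)
  fix s assume "s \<in> [L]\<^bsup>k\<^esup>"
  then show "xt s = (\<Sum>j\<le>k. y (restr s j))" unfolding xt_def nsets_def by simp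
next
  fix t assume "t \<in> nsets_le L k" "t \<noteq> {}"
  then show "finite (supp e (y t))" using supp_y finite_subset by blast
next
  fix s j1 j2 assume s: "s \<in> [L]\<^bsup>k\<^esup>" and j: "1 \<le> j1 \<and> j1 < j2 \<and> j2 \<le> k"
  obtain a b where ab: "j1 = Suc a" "j2 = Suc b" using j by (cases j1; cases j2) auto
  have fs: "finite s" "s \<subseteq> L" "card s = k" using s unfolding nsets_def by auto
  show "set_less (supp e (y (restr s j1))) (supp e (y (restr s j2)))"
    unfolding ab by (rule supp_restr) (use fs j ab sl_less[OF fs(1), of a b] in auto)
next
  fix s1 s2 j1 j2 assume s1: "s1 \<in> [L]\<^bsup>k\<^esup>" and s2: "s2 \<in> [L]\<^bsup>k\<^esup>" and pl: "plegma k s1 s2"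
    and j: "1 \<le> j1 \<and> j1 \<le> j2 \<and> j2 \<le> k"
  obtain a b where ab: "j1 = Suc a" "j2 = Suc b" using j by (cases j1; cases j2) auto
  have f1: "finite s1" "s1 \<subseteq> L" "card s1 = k" using s1 unfolding nsets_def by auto
  have f2: "finite s2" "s2 \<subseteq> L" "card s2 = k" using s2 unfolding nsets_def by auto
  have p1: "\<forall>i<k. sl s1 ! i < sl s2 ! i" using pl unfolding plegma_def Let_def by blast
  have "sl s1 ! a < sl s2 ! a" using p1 j ab by simp
  also have "sl s2 ! a \<le> sl s2 ! b" using sl_le[OF f2(1), of a b] j ab f2 by simp
  finally have lt: "sl s1 ! a < sl s2 ! b" .
  show "set_less (supp e (y (restr s1 j1))) (supp e (y (restr s2 j2)))"
    unfolding ab by (rule supp_restr) (use f1 f2 j ab lt in auto)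
next
  fix s1 s2 j1 j2 assume s1: "s1 \<in> [L]\<^bsup>k\<^esup>" and s2: "s2 \<in> [L]\<^bsup>k\<^esup>" and pl: "plegma k s1 s2"
    and j: "1 \<le> j1 \<and> j1 < j2 \<and> j2 \<le> k"
  obtain a b where ab: "j1 = Suc a" "j2 = Suc b" using j by (cases j1; cases j2) auto
  have f1: "finite s1" "s1 \<subseteq> L" "card s1 = k" using s1 unfolding nsets_def by auto
  have f2: "finite s2" "s2 \<subseteq> L" "card s2 = k" using s2 unfolding nsets_def by auto
  have p2: "\<forall>i. Suc i < k \<longrightarrow> sl s2 ! i < sl s1 ! Suc i" using pl unfolding plegma_def Let_def by blast
  have "sl s2 ! a < sl s1 ! Suc a" using p2 j ab by simp
  also have "sl s1 ! Suc a \<le> sl s1 ! b" using sl_le[OF f1(1), of "Suc a" b] j ab f1 by simp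
  finally have lt: "sl s2 ! a < sl s1 ! b" .
  show "set_less (supp e (y (restr s2 j1))) (supp e (y (restr s1 j2)))"
    unfolding ab by (rule supp_restr) (use f1 f2 j ab lt in auto)
qed

end

lemma aux_eq: "(c::real) > 0 \<Longrightarrow> K > 0 \<Longrightarrow> c * (\<eta> / (2 * c * K) * K) = \<eta> / 2"
  by (simp add: field_simps)

context constr begin

lemma bound_ii:
  assumes s: "s \<in> [L]\<^bsup>k\<^esup>" and mn: "Min s = enumerate L n"
  shows "norm (x s - xt s) < \<epsilon> n"
proof -
  have fs: "finite s" "s \<subseteq> L" "card s = k" using s unfolding nsets_def by auto
  have sle: "s \<in> nsets_le L k" using fs unfolding nsets_le_def by auto
  have "s \<in> [M]\<^bsup>k\<^esup>" using s L_sub unfolding nsets_def by auto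
  then have xs: "x s = \<phi> s" using sub unfolding subordinated_def by auto
  have diff: "x s - xt s = (\<Sum>j<k. w (restr s (Suc j)))" using tele[OF sle] xs fs(3) by simp
  have mn': "mseq n = Min s" using mn enumL by simp
  have each: "norm (w (restr s (Suc j))) \<le> \<epsilon> n / (real k + 1)" if j: "j < k" for j
  proof -
    have j': "j < card s" using j fs by simp
    have rf: "restr s (Suc j) \<in> nsets_le L k" by (rule restr_in[OF sle])
    have ne: "restr s (Suc j) \<noteq> {}" using restr_nonempty[OF fs(1) j'] .
    have "norm (w (restr s (Suc j))) < d (idx (Max (restr s (Suc j))))" by (rule w_bound[OF rf ne])
    also have "d (idx (Max (restr s (Suc j)))) \<le> d n"
    proof (rule d_anti)
      have mi: "Max (restr s (Suc j)) \<in> s" using Max_in[OF finite_restr ne] restr_sub[OF fs(1)] by blast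
      then have "Min s \<le> Max (restr s (Suc j))" using fs(1) by simp
      moreover have "Max (restr s (Suc j)) \<in> L" using mi fs(2) by blast
      moreover have "mseq n \<in> L" unfolding L_def by simp
      ultimately have "idx (mseq n) \<le> idx (Max (restr s (Suc j)))" using idx_le mn' by metis
      then show "n \<le> idx (Max (restr s (Suc j)))" by simp
    qed
    also have "d n \<le> \<epsilon> n / (real k + 1)" by (rule d_le) simp
    finally show ?thesis by simp
  qed
  have "norm (x s - xt s) \<le> (\<Sum>j<k. \<epsilon> n / (real k + 1))" unfolding diff by (rule sum_norm_le) (simp add: each)
  also have "\<dots> = \<epsilon> n * (real k / (real k + 1))" by simp
  also have "\<dots> < \<epsilon> n * 1"
    using epos by (intro mult_strict_left_mono) auto
  finally show ?thesis by simp
qed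

lemma xt_cont: "continuous_map (subtopology cantor_topology (nsets_le L k)) weak_topology xt"
proof (rule weak_cont_intro)
  fix f :: "'a \<Rightarrow> real" assume f: "bounded_linear f"
  have lf: "linear f" using f by (rule bounded_linear.linear)
  obtain K where K: "K > 0" "\<And>v. norm (f v) \<le> norm v * K" using bounded_linear.pos_bounded[OF f] by blast
  show "continuous_map (subtopology cantor_topology (nsets_le L k)) euclideanreal (f \<circ> xt)"
  proof (rule cyl_cont)
    fix t and \<eta> :: real assume t: "t \<in> nsets_le L k" and \<eta>: "\<eta> > 0"
    have tM: "t \<in> nsets_le M k" using t L_sub unfolding nsets_le_def by auto
    obtain N1 where N1: "\<forall>s\<in>nsets_le M k. s \<in> Cyl N1 t \<longrightarrow> \<bar>(f \<circ> \<phi>) s - (f \<circ> \<phi>) t\<bar> < \<eta>/2"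
      using cont_at_cyl[OF phi_cont[OF f] tM, of "\<eta>/2"] \<eta> by auto
    have pos: "0 < \<eta> / (2 * (real k + 1) * K)" using \<eta> K by simp
    obtain n0 where n0: "d n0 < \<eta> / (2 * (real k + 1) * K)" using d_small[OF pos] by blast
    define N where "N = max N1 (max (Max t) (mseq n0))"
    show "\<exists>N. \<forall>s\<in>nsets_le L k. s \<in> Cyl N t \<longrightarrow> \<bar>(f \<circ> xt) s - (f \<circ> xt) t\<bar> < \<eta>"
    proof (rule exI[of _ N], intro ballI impI)
      fix s assume s: "s \<in> nsets_le L k" and sc: "s \<in> Cyl N t"
      have fs: "finite s" "s \<subseteq> L" "card s \<le> k" using s unfolding nsets_le_def by auto
      have ft: "finite t" "t \<subseteq> L" "card t \<le> k" using t unfolding nsets_le_def by auto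
      have sM: "s \<in> nsets_le M k" using s L_sub unfolding nsets_le_def by auto
      have "s \<in> Cyl N1 t" using sc Cyl_mono[of N1 N t] unfolding N_def by auto
      then have A: "\<bar>f (\<phi> s) - f (\<phi> t)\<bar> < \<eta>/2" using N1 sM by auto
      have T: "{a\<in>s. a \<le> N} = t"
      proof (rule set_eqI)
        fix a
        have tN: "a \<le> N" if "a \<in> t"
        proof -
          have "a \<le> Max t" using ft(1) that by simp
          then show ?thesis unfolding N_def by simp
        qed
        show "a \<in> {a\<in>s. a \<le> N} \<longleftrightarrow> a \<in> t" using sc tN unfolding Cyl_def by auto
      qed
      have ts: "t \<subseteq> s" using T by blast
      have ct: "card t \<le> card s" using card_mono[OF fs(1) ts] .
      define W where "W j = f (w (restr s (Suc j)))" for j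
      have xs: "f (xt s) = f (\<phi> s) - (\<Sum>j<card s. W j)"
        unfolding W_def tele[OF s] linear_diff[OF lf] linear_sum[OF lf] by simp
      have xtt: "f (xt t) = f (\<phi> t) - (\<Sum>j<card t. f (w (restr t (Suc j))))"
        unfolding tele[OF t] linear_diff[OF lf] linear_sum[OF lf] by simp
      have same: "(\<Sum>j<card t. f (w (restr t (Suc j)))) = (\<Sum>j<card t. W j)"
      proof (rule sum.cong[OF refl])
        fix j assume "j \<in> {..<card t}"
        then have "Suc j \<le> card {a\<in>s. a \<le> N}" using T by simp
        then have "restr s (Suc j) = restr {a\<in>s. a \<le> N} (Suc j)" by (rule restr_cyl[OF fs(1)])
        then show "f (w (restr t (Suc j))) = W j" unfolding W_def T by simp
      qed
      have split: "(\<Sum>j<card s. W j) = (\<Sum>j<card t. W j) + (\<Sum>j\<in>{card t..<card s}. W j)"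
        using sum.atLeastLessThan_concat[of 0 "card t" "card s" W] ct by (simp add: lessThan_atLeast0)
      have Wb: "\<bar>W j\<bar> \<le> d n0 * K" if j: "j \<in> {card t..<card s}" for j
      proof -
        have j1: "card {a\<in>s. a \<le> N} \<le> j" "j < card s" using j T by auto
        let ?r = "restr s (Suc j)"
        have rf: "?r \<in> nsets_le L k" by (rule restr_in[OF s])
        have ne: "?r \<noteq> {}" using restr_nonempty[OF fs(1) j1(2)] .
        have "N < sl s ! j" by (rule restr_cyl2[OF fs(1) j1])
        then have "mseq n0 < Max ?r" using Max_restr[OF fs(1) j1(2)] unfolding N_def by simp
        moreover have "Max ?r \<in> L" using restr_facts[OF fs(1) fs(2) j1(2)] Max_in by blast
        moreover have "mseq n0 \<in> L" unfolding L_def by simp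
        ultimately have "idx (mseq n0) \<le> idx (Max ?r)" using idx_le by (metis less_imp_le)
        then have "n0 \<le> idx (Max ?r)" by simp
        then have "d (idx (Max ?r)) \<le> d n0" by (rule d_anti)
        then have nw: "norm (w ?r) \<le> d n0" using w_bound[OF rf ne] by simp
        have "\<bar>W j\<bar> \<le> norm (w ?r) * K" using K(2)[of "w ?r"] unfolding W_def by simp
        also have "\<dots> \<le> d n0 * K" using nw K(1) by (simp add: mult_right_mono)
        finally show ?thesis .
      qed
      have "\<bar>\<Sum>j\<in>{card t..<card s}. W j\<bar> \<le> (\<Sum>j\<in>{card t..<card s}. \<bar>W j\<bar>)" by (rule sum_abs)
      also have "\<dots> \<le> (\<Sum>j\<in>{card t..<card s}. d n0 * K)" by (rule sum_mono) (rule Wb)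
      also have "\<dots> = real (card s - card t) * (d n0 * K)" by simp
      also have "\<dots> \<le> (real k + 1) * (d n0 * K)"
        using fs(3) d_pos[of n0] K(1) by (intro mult_right_mono) auto
      also have "\<dots> < (real k + 1) * (\<eta> / (2 * (real k + 1) * K) * K)"
        using n0 K(1) by (intro mult_strict_left_mono mult_strict_right_mono) auto
      also have "\<dots> = \<eta> / 2" by (rule aux_eq) (use K(1) in auto)
      finally have B: "\<bar>\<Sum>j\<in>{card t..<card s}. W j\<bar> < \<eta> / 2" .
      have "(f \<circ> xt) s - (f \<circ> xt) t = (f (\<phi> s) - f (\<phi> t)) - (\<Sum>j\<in>{card t..<card s}. W j)"
        using xs xtt same split by simp
      then show "\<bar>(f \<circ> xt) s - (f \<circ> xt) t\<bar> < \<eta>" using A B by linarith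
    qed
  qed
qed

lemma main_result:
  "\<exists>L xt y. L \<subseteq> M \<and> infinite L \<and>
     canonical_tree_decomposition e L k xt y \<and> y {} = \<phi> {} \<and>
     (\<forall>s\<in>[L]\<^bsup>k\<^esup>. \<forall>n. Min s = enumerate L n \<longrightarrow> norm (x s - xt s) < \<epsilon> n) \<and>
     (\<exists>\<psi>. subordinated L k xt \<psi> \<and> \<psi> {} = \<phi> {})"
proof (intro exI conjI)
  show "L \<subseteq> M" by (rule L_sub)
  show "infinite L" by (rule L_inf)
  show "canonical_tree_decomposition e L k xt y" by (rule canon)
  show "y {} = \<phi> {}" by (simp add: y_def)
  show "\<forall>s\<in>[L]\<^bsup>k\<^esup>. \<forall>n. Min s = enumerate L n \<longrightarrow> norm (x s - xt s) < \<epsilon> n"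
    using bound_ii by blast
  show "subordinated L k xt xt" unfolding subordinated_def using xt_cont by simp
  show "xt {} = \<phi> {}" by (rule xt_empty)
qed

end

theorem mainTheorem5:
  fixes e :: "nat \<Rightarrow> 'a::banach" and k :: nat and x :: "nat set \<Rightarrow> 'a"
    and \<epsilon> :: "nat \<Rightarrow> real" and M :: "nat set" and \<phi> :: "nat set \<Rightarrow> 'a"
  assumes "schauder_basis e"
    and "\<forall>n. \<epsilon> n > 0" and "\<epsilon> \<longlonglongrightarrow> 0"
    and "infinite M"
    and "subordinated M k x \<phi>"
  shows "\<exists>L xt y. L \<subseteq> M \<and> infinite L \<and>
     canonical_tree_decomposition e L k xt y \<and> y {} = \<phi> {} \<and>
     (\<forall>s\<in>[L]\<^bsup>k\<^esup>. \<forall>n. Min s = enumerate L n \<longrightarrow> norm (x s - xt s) < \<epsilon> n) \<and>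
     (\<exists>\<psi>. subordinated L k xt \<psi> \<and> \<psi> {} = \<phi> {})"
proof -
  interpret c: constr e k x \<epsilon> M \<phi>
    by unfold_locales (use assms in auto)
  show ?thesis by (rule c.main_result)
qed

end
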